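(* In the setting below, for any epoch $t$, with probability at least $1-\delta$ the following hold simultaneously for all honest nodes $k\in\mathcal{G}$: (a) $\|\mu_t^{(k)}-\nabla f(\tilde{x}_{t-1})\|\le\mathcal{V}\sqrt{C/B_t}$; (b) $\|\mu_t^{(k)}-\mu_t^{\mathrm{med}}\|\le4\mathcal{V}\sqrt{C/B_t}$ and $\|\mu_t^{\mathrm{med}}-\nabla f(\tilde{x}_{t-1})\|\le3\mathcal{V}\sqrt{C/B_t}$, where $C=2\log(2K/\delta)$.
   Context: Setting: $f(x)=\mathbb{E}_{\xi\sim\mathcal{D}}f(x;\xi)$ with $\|\nabla f(x;\xi)-\nabla f(x)\|\le\mathcal{V}$ for all $x$ and all $\xi\sim\mathcal{D}$; $\delta\in(0,1)$. There are $K$ worker nodes; the honest set $\mathcal{G}$ satisfies $|\mathcal{G}|\ge(1-\alpha)K$ with $\alpha\in[0,1/2)$, the other nodes being Byzantine. At epoch $t$, each $k\in\mathcal{G}$ sends $\mu_t^{(k)}=\frac{1}{B_t}\sum_{i=1}^{B_t}\nabla f(\tilde{x}_{t-1};\xi_{t,i}^{(k)})$ with i.i.d. samples $\xi_{t,i}^{(k)}\sim\mathcal{D}$; each Byzantine node sends an arbitrary vector. With $\mathfrak{T}_\mu=2\mathcal{V}\sqrt{C/B_t}$, $\mu_t^{\mathrm{med}}$ is defined as $\mu_t^{(k)}$ for any node $k$ such that $|\{k'\in[K]:\|\mu_t^{(k')}-\mu_t^{(k)}\|\le\mathfrak{T}_\mu\}|>K/2$. *)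

theory Defs
  imports "HOL-Probability.Probability"
begin

definition med_node :: "nat \<Rightarrow> real \<Rightarrow> (nat \<Rightarrow> 'a::real_normed_vector) \<Rightarrow> nat \<Rightarrow> bool" where
  "med_node K T v j \<longleftrightarrow> j \<in> {1..K} \<and>
     real (card {k' \<in> {1..K}. norm (v k' - v j) \<le> T}) > real K / 2"

end

theory Submission
  imports Defs
begin


lemma sinh_slope_mono:
  fixes s1 s2 :: real
  assumes "0 < s1" "s1 \<le> s2"
  shows "sinh s1 / s1 \<le> sinh s2 / s2"
proof -
  have cv: "convex_on {0..} sinh"
  proof (rule convex_on_realI[where f'=cosh])
    show "connected {0::real..}" by (simp add: connected_Ici)
    show "\<And>x. x \<in> {0..} \<Longrightarrow> (sinh has_real_derivative cosh x) (at x)"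
      by (auto intro!: derivative_eq_intros)
    show "\<And>x y::real. x \<in> {0..} \<Longrightarrow> y \<in> {0..} \<Longrightarrow> x \<le> y \<Longrightarrow> cosh x \<le> cosh y"
      by (metis atLeast_iff cosh_real_nonneg_le_iff)
  qed
  define t where "t = s1 / s2"
  have t: "0 \<le> t" "t \<le> 1" using assms by (auto simp: t_def)
  have "sinh ((1 - t) * 0 + t * s2) \<le> (1 - t) * sinh 0 + t * sinh s2"
    using convex_onD[OF cv t, of 0 s2] assms by simp
  hence "sinh s1 \<le> s1 / s2 * sinh s2" using assms by (simp add: t_def)
  thus ?thesis using assms by (simp add: field_simps)
qed

lemma cosh_sqrt_convex_pos: "convex_on {0<..} (\<lambda>u::real. cosh (sqrt u))"
proof (rule convex_on_realI[where f'="\<lambda>u. sinh (sqrt u) / (2 * sqrt u)"])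
  show "connected {0::real<..}" by simp
  show "((\<lambda>u. cosh (sqrt u)) has_real_derivative sinh (sqrt u) / (2 * sqrt u)) (at u)" if "u \<in> {0<..}" for u
    using that by (auto intro!: derivative_eq_intros simp: field_simps)
  show "sinh (sqrt x) / (2 * sqrt x) \<le> sinh (sqrt y) / (2 * sqrt y)"
    if "x \<in> {0<..}" "y \<in> {0<..}" "x \<le> y" for x y
  proof -
    have "sinh (sqrt x) / sqrt x \<le> sinh (sqrt y) / sqrt y"
      using that by (intro sinh_slope_mono) auto
    hence "(sinh (sqrt x) / sqrt x) / 2 \<le> (sinh (sqrt y) / sqrt y) / 2" by simp
    thus ?thesis by (simp add: field_simps)
  qed
qed

lemma cosh_sqrt_convex: "convex_on {0..} (\<lambda>u::real. cosh (sqrt u))"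
proof (rule convex_on_linorderI)
  show "convex {0::real..}" by simp
  fix t x y :: real
  assume t: "0 < t" "t < 1" and xy: "x \<in> {0..}" "y \<in> {0..}" "x < y"
  have "cosh (sqrt ((1 - t) * x + t * y)) \<le> (1 - t) * cosh (sqrt x) + t * cosh (sqrt y)"
  proof (cases "x = 0")
    case False
    then show ?thesis using convex_onD[OF cosh_sqrt_convex_pos, of t x y] t xy by auto
  next
    case True
    let ?L = "\<lambda>e. cosh (sqrt ((1 - t) * e + t * y))"
    let ?R = "\<lambda>e. (1 - t) * cosh (sqrt e) + t * cosh (sqrt y)"
    have c1: "isCont ?L 0" by (intro continuous_intros)
    have c2: "isCont ?R 0" by (intro continuous_intros)
    have l1: "(?L \<longlongrightarrow> ?L 0) (at_right 0)"
      using c1 unfolding isCont_def by (rule tendsto_within_subset) auto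
    have l2: "(?R \<longlongrightarrow> ?R 0) (at_right 0)"
      using c2 unfolding isCont_def by (rule tendsto_within_subset) auto
    have ev: "eventually (\<lambda>e. ?L e \<le> ?R e) (at_right 0)"
    proof -
      have "eventually (\<lambda>e. e \<in> {0<..<y}) (at_right (0::real))"
        using xy True by (intro eventually_at_right_real) auto
      thus ?thesis
        by eventually_elim (use convex_onD[OF cosh_sqrt_convex_pos, of t] t xy in auto)
    qed
    have "?L 0 \<le> ?R 0"
      by (rule tendsto_le[OF trivial_limit_at_right_real l2 l1 ev])
    thus ?thesis using True by simp
  qed
  thus "cosh (sqrt ((1 - t) *\<^sub>R x + t *\<^sub>R y)) \<le> (1 - t) * cosh (sqrt x) + t * cosh (sqrt y)" by simp
qed

lemma cosh_chord:
  fixes a c t :: real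
  assumes "0 \<le> a" "0 < c" "-1 \<le> t" "t \<le> 1"
  shows "cosh (sqrt (a^2 + c^2 + 2*a*c*t)) \<le> cosh a * cosh c + t * sinh a * sinh c"
proof -
  define th where "th = (1 + t) / 2"
  have th: "0 \<le> th" "th \<le> 1" using assms by (auto simp: th_def)
  have "cosh (sqrt ((1 - th) * (a-c)^2 + th * (a+c)^2)) \<le> (1 - th) * cosh (sqrt ((a-c)^2)) + th * cosh (sqrt ((a+c)^2))"
    using convex_onD[OF cosh_sqrt_convex th, of "(a-c)^2" "(a+c)^2"] by simp
  moreover have "(1 - th) * (a-c)^2 + th * (a+c)^2 = a^2 + c^2 + 2*a*c*t"
    by (simp add: th_def power2_eq_square field_simps)
  moreover have "cosh (sqrt ((a-c)^2)) = cosh (a - c)"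
    by (metis cosh_real_abs real_sqrt_abs)
  moreover have "cosh (sqrt ((a+c)^2)) = cosh (a + c)"
    using assms by simp
  moreover have "(1 - th) * cosh (a - c) + th * cosh (a + c) = cosh a * cosh c + t * sinh a * sinh c"
    by (simp add: cosh_add cosh_diff th_def field_simps)
  ultimately show ?thesis by simp
qed

lemma cosh_norm_step:
  fixes x d :: "'a::real_inner"
  assumes "norm d \<le> c" "0 < c"
  shows "cosh (norm (x + d)) \<le> cosh (norm x) * cosh c + sinh (norm x) * sinh c * (inner x d / (c * norm x))"
proof (cases "x = 0")
  case True
  then show ?thesis using assms by (simp add: cosh_real_nonneg_le_iff)
next
  case False
  define a where "a = norm x"
  have a: "0 < a" using False by (simp add: a_def)
  define t where "t = inner x d / (a * c)"
  have cs: "\<bar>inner x d\<bar> \<le> a * c"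
    using Cauchy_Schwarz_ineq2[of x d] assms a_def
    by (smt (verit, ccfv_SIG) mult_left_mono norm_ge_zero)
  have t: "-1 \<le> t" "t \<le> 1" using cs a assms
    by (auto simp: t_def divide_simps abs_le_iff)
  have "(norm (x + d))^2 = a^2 + 2 * inner x d + (norm d)^2"
    by (simp add: a_def power2_norm_eq_inner inner_add_left inner_add_right inner_commute)
  also have "\<dots> \<le> a^2 + c^2 + 2*a*c*t"
    using assms a by (simp add: t_def power_mono)
  finally have "norm (x + d) \<le> sqrt (a^2 + c^2 + 2*a*c*t)"
    by (simp add: real_le_rsqrt)
  moreover have "0 \<le> sqrt (a^2 + c^2 + 2*a*c*t)"
    using calculation norm_ge_zero order_trans by blast
  ultimately have "cosh (norm (x + d)) \<le> cosh (sqrt (a^2 + c^2 + 2*a*c*t))"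
    by (subst cosh_real_nonneg_le_iff) auto
  also have "\<dots> \<le> cosh a * cosh c + t * sinh a * sinh c"
    using cosh_chord[OF _ assms(2) t] a by simp
  finally show ?thesis by (simp add: a_def t_def mult.commute mult.left_commute)
qed



lemma cosh_le_exp_sq: "cosh (y::real) \<le> exp (y^2 / 2)"
proof -
  have main: "cosh y \<le> exp (y^2/2)" if "y \<ge> 0" for y :: real
  proof -
    have "-(2*y) * (1/2) + ln (1 + (1/2) * (exp (2*y) - 1)) \<le> (2*y)^2 / 8"
      using Hoeffdings_lemma_aux[of "2*y" "1/2"] that by simp
    moreover have "1 + (1/2) * (exp (2*y) - 1) = exp y * cosh y"
      by (simp add: cosh_def exp_minus field_simps flip: exp_add)
    moreover have "ln (exp y * cosh y) = y + ln (cosh y)"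
      by (simp add: ln_mult)
    ultimately have "ln (cosh y) \<le> y^2/2" by (simp add: power2_eq_square)
    thus ?thesis by (metis cosh_real_pos exp_le_cancel_iff exp_ln)
  qed
  show ?thesis using main[of "\<bar>y\<bar>"] by simp
qed

lemma Hf_meas:
  fixes l c :: real
  shows "(\<lambda>y::'x::euclidean_space. (sinh (l * norm y) * sinh (l*c) / (l*c*(l*norm y)) * l^2) *\<^sub>R y) \<in> borel_measurable borel"
  apply measurable
  apply (auto intro!: borel_measurable_continuous_onI continuous_intros)
  done

lemma Hf_norm:
  fixes l c :: real and y :: "'x::euclidean_space"
  assumes "0 < l" "0 < c"
  shows "norm ((sinh (l * norm y) * sinh (l*c) / (l*c*(l*norm y)) * l^2) *\<^sub>R y) = sinh (l * norm y) * sinh (l*c) / c"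
proof (cases "y = 0")
  case True then show ?thesis by simp
next
  case False
  have "sinh (l * norm y) \<ge> 0" "sinh (l*c) \<ge> 0" using assms by auto
  then show ?thesis using False assms by (simp add: abs_mult power2_eq_square field_simps)
qed

lemma cosh_real_meas[measurable]: "(cosh :: real \<Rightarrow> real) \<in> borel_measurable borel"
  by (intro borel_measurable_continuous_onI continuous_intros)

lemma bounded_integrable:
  fixes f :: "'a \<Rightarrow> 'b::{banach,second_countable_topology}"
  assumes "finite_measure M" "f \<in> borel_measurable M" "\<And>\<omega>. \<omega> \<in> space M \<Longrightarrow> norm (f \<omega>) \<le> B"
  shows "integrable M f"
  using finite_measure.integrable_const_bound[OF assms(1), of f B] assms(2,3) by (auto intro: AE_I2)

lemma cosh_sum_bound:
  fixes Z :: "'i \<Rightarrow> 'w \<Rightarrow> 'x::euclidean_space" and M :: "'w measure"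
  assumes P: "prob_space M" and fin: "finite I"
    and ind: "prob_space.indep_vars M (\<lambda>_. borel) Z I"
    and bnd: "\<And>i \<omega>. i \<in> I \<Longrightarrow> \<omega> \<in> space M \<Longrightarrow> norm (Z i \<omega>) \<le> c"
    and mean: "\<And>i. i \<in> I \<Longrightarrow> integral\<^sup>L M (Z i) = 0"
    and c: "0 < c" and l: "0 < l"
  shows "integral\<^sup>L M (\<lambda>\<omega>. cosh (l * norm (\<Sum>i\<in>I. Z i \<omega>))) \<le> cosh (l*c) ^ card I"
proof -
  interpret prob_space M by fact
  show ?thesis using fin ind bnd mean
  proof (induction I rule: finite_induct)
    case empty
    then show ?case by simp
  next
    case (insert j I)
    have indI: "indep_vars (\<lambda>_. borel) Z I" using insert.prems(1) indep_vars_subset by blast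
    have rv[measurable]: "\<And>i. i \<in> insert j I \<Longrightarrow> Z i \<in> borel_measurable M"
      using insert.prems(1) unfolding indep_vars_def by auto
    define S where "S \<omega> = (\<Sum>i\<in>I. Z i \<omega>)" for \<omega>
    define Hf where "Hf y = (sinh (l * norm y) * sinh (l*c) / (l*c*(l*norm y)) * l^2) *\<^sub>R y" for y :: 'x
    have Hf_m[measurable]: "Hf \<in> borel_measurable borel"
      unfolding Hf_def by (rule Hf_meas)
    have S_m[measurable]: "S \<in> borel_measurable M"
      unfolding S_def using rv by (intro borel_measurable_sum) auto
    have Zj_m[measurable]: "Z j \<in> borel_measurable M" using rv by auto
    have S_bnd: "norm (S \<omega>) \<le> card I * c" if "\<omega> \<in> space M" for \<omega>
    proof -
      have "norm (S \<omega>) \<le> (\<Sum>i\<in>I. norm (Z i \<omega>))" unfolding S_def by (rule norm_sum)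
      also have "\<dots> \<le> (\<Sum>i\<in>I. c)" using insert.prems(2) that by (intro sum_mono) auto
      finally show ?thesis by simp
    qed
    have Zj_bnd: "norm (Z j \<omega>) \<le> c" if "\<omega> \<in> space M" for \<omega>
      using insert.prems(2) that by auto
    have pw: "cosh (l * norm (S \<omega> + Z j \<omega>)) \<le> cosh (l * norm (S \<omega>)) * cosh (l*c) + inner (Hf (S \<omega>)) (Z j \<omega>)"
      if "\<omega> \<in> space M" for \<omega>
    proof -
      have "norm (l *\<^sub>R Z j \<omega>) \<le> l * c" using Zj_bnd[OF that] l by (simp add: mult_left_mono)
      from cosh_norm_step[OF this, of "l *\<^sub>R S \<omega>"] l c
      have "cosh (norm (l *\<^sub>R S \<omega> + l *\<^sub>R Z j \<omega>)) \<le> cosh (norm (l *\<^sub>R S \<omega>)) * cosh (l * c) +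
        sinh (norm (l *\<^sub>R S \<omega>)) * sinh (l * c) * (inner (l *\<^sub>R S \<omega>) (l *\<^sub>R Z j \<omega>) / (l * c * norm (l *\<^sub>R S \<omega>)))"
        by simp
      moreover have "norm (l *\<^sub>R S \<omega> + l *\<^sub>R Z j \<omega>) = l * norm (S \<omega> + Z j \<omega>)"
        using l by (simp flip: scaleR_right_distrib)
      moreover have "sinh (norm (l *\<^sub>R S \<omega>)) * sinh (l * c) * (inner (l *\<^sub>R S \<omega>) (l *\<^sub>R Z j \<omega>) / (l * c * norm (l *\<^sub>R S \<omega>)))
          = inner (Hf (S \<omega>)) (Z j \<omega>)"
        using l by (simp add: Hf_def power2_eq_square mult_ac)
      ultimately show ?thesis using l by simp
    qed
    have int1: "integrable M (\<lambda>\<omega>. cosh (l * norm (S \<omega> + Z j \<omega>)))"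
    proof (rule bounded_integrable[where B="cosh (l * (card I * c + c))"])
      show "finite_measure M" by unfold_locales
      show "(\<lambda>\<omega>. cosh (l * norm (S \<omega> + Z j \<omega>))) \<in> borel_measurable M" by measurable
      fix \<omega> assume w: "\<omega> \<in> space M"
      have "norm (S \<omega> + Z j \<omega>) \<le> card I * c + c"
        using norm_triangle_ineq[of "S \<omega>" "Z j \<omega>"] S_bnd[OF w] Zj_bnd[OF w] by linarith
      hence "l * norm (S \<omega> + Z j \<omega>) \<le> l * (card I * c + c)" using l by (simp add: mult_left_mono)
      hence "cosh (l * norm (S \<omega> + Z j \<omega>)) \<le> cosh (l * (card I * c + c))"
        using l c by (subst cosh_real_nonneg_le_iff) auto
      thus "norm (cosh (l * norm (S \<omega> + Z j \<omega>))) \<le> cosh (l * (card I * c + c))" by simp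
    qed
    have int2: "integrable M (\<lambda>\<omega>. cosh (l * norm (S \<omega>)))"
    proof (rule bounded_integrable[where B="cosh (l * (card I * c))"])
      show "finite_measure M" by unfold_locales
      show "(\<lambda>\<omega>. cosh (l * norm (S \<omega>))) \<in> borel_measurable M" by measurable
      fix \<omega> assume w: "\<omega> \<in> space M"
      have "l * norm (S \<omega>) \<le> l * (card I * c)" using l S_bnd[OF w] by (simp add: mult_left_mono)
      hence "cosh (l * norm (S \<omega>)) \<le> cosh (l * (card I * c))"
        using l c by (subst cosh_real_nonneg_le_iff) auto
      thus "norm (cosh (l * norm (S \<omega>))) \<le> cosh (l * (card I * c))" by simp
    qed
    have Zj_int: "integrable M (Z j)"
      by (rule bounded_integrable[where B=c]) (unfold_locales, auto intro: Zj_bnd)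
    have indb: "indep_var borel (\<lambda>\<omega>. Hf (S \<omega>) \<bullet> b) borel (\<lambda>\<omega>. Z j \<omega> \<bullet> b)" for b
    proof -
      have "indep_var (PiM I (\<lambda>_. borel)) (\<lambda>\<omega>. restrict (\<lambda>i. Z i \<omega>) I) (PiM {j} (\<lambda>_. borel)) (\<lambda>\<omega>. restrict (\<lambda>i. Z i \<omega>) {j})"
        using insert.hyps(2) by (intro indep_var_restrict[OF insert.prems(1)]) auto
      from indep_var_compose[OF this, of "\<lambda>f. Hf (\<Sum>i\<in>I. f i) \<bullet> b" borel "\<lambda>f. f j \<bullet> b" borel]
      have "indep_var borel ((\<lambda>f. Hf (\<Sum>i\<in>I. f i) \<bullet> b) \<circ> (\<lambda>\<omega>. restrict (\<lambda>i. Z i \<omega>) I))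
                      borel ((\<lambda>f. f j \<bullet> b) \<circ> (\<lambda>\<omega>. restrict (\<lambda>i. Z i \<omega>) {j}))"
        by measurable
      moreover have "((\<lambda>f. Hf (\<Sum>i\<in>I. f i) \<bullet> b) \<circ> (\<lambda>\<omega>. restrict (\<lambda>i. Z i \<omega>) I)) = (\<lambda>\<omega>. Hf (S \<omega>) \<bullet> b)"
        by (auto simp: S_def fun_eq_iff intro!: arg_cong[where f="\<lambda>y. Hf y \<bullet> b"] sum.cong)
      moreover have "((\<lambda>f. f j \<bullet> b) \<circ> (\<lambda>\<omega>. restrict (\<lambda>i. Z i \<omega>) {j})) = (\<lambda>\<omega>. Z j \<omega> \<bullet> b)"
        by (auto simp: fun_eq_iff)
      ultimately show ?thesis by simp
    qed
    have Hb_int: "integrable M (\<lambda>\<omega>. Hf (S \<omega>) \<bullet> b)" if b: "b \<in> Basis" for b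
    proof (rule bounded_integrable[where B="sinh (l * (card I * c)) * sinh (l*c) / c"])
      show "finite_measure M" by unfold_locales
      show "(\<lambda>\<omega>. Hf (S \<omega>) \<bullet> b) \<in> borel_measurable M" by measurable
      fix \<omega> assume w: "\<omega> \<in> space M"
      have "norm (Hf (S \<omega>) \<bullet> b) \<le> norm (Hf (S \<omega>))" using b by (simp add: Basis_le_norm)
      also have "\<dots> = sinh (l * norm (S \<omega>)) * sinh (l*c) / c"
        unfolding Hf_def by (rule Hf_norm[OF l c])
      also have "\<dots> \<le> sinh (l * (card I * c)) * sinh (l*c) / c"
        using l c S_bnd[OF w] by (intro divide_right_mono mult_right_mono) (auto simp: mult_left_mono)
      finally show "norm (Hf (S \<omega>) \<bullet> b) \<le> sinh (l * (card I * c)) * sinh (l*c) / c" .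
    qed
    have Zb_int: "integrable M (\<lambda>\<omega>. Z j \<omega> \<bullet> b)" for b
      by (rule integrable_inner_left) (rule Zj_int)
    have inner_eq: "(\<lambda>\<omega>. inner (Hf (S \<omega>)) (Z j \<omega>)) = (\<lambda>\<omega>. \<Sum>b\<in>Basis. (Hf (S \<omega>) \<bullet> b) * (Z j \<omega> \<bullet> b))"
      by (rule ext, rule euclidean_inner)
    have prod_int: "integrable M (\<lambda>\<omega>. (Hf (S \<omega>) \<bullet> b) * (Z j \<omega> \<bullet> b))" if "b \<in> Basis" for b
      by (rule indep_var_integrable[OF indb Hb_int[OF that] Zb_int])
    have int3: "integrable M (\<lambda>\<omega>. inner (Hf (S \<omega>)) (Z j \<omega>))"
      unfolding inner_eq by (rule Bochner_Integration.integrable_sum) (rule prod_int)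
    have E3: "integral\<^sup>L M (\<lambda>\<omega>. inner (Hf (S \<omega>)) (Z j \<omega>)) = 0"
    proof -
      have "integral\<^sup>L M (\<lambda>\<omega>. inner (Hf (S \<omega>)) (Z j \<omega>)) = (\<Sum>b\<in>Basis. integral\<^sup>L M (\<lambda>\<omega>. (Hf (S \<omega>) \<bullet> b) * (Z j \<omega> \<bullet> b)))"
        unfolding inner_eq by (rule Bochner_Integration.integral_sum) (rule prod_int)
      also have "\<dots> = (\<Sum>b\<in>Basis. integral\<^sup>L M (\<lambda>\<omega>. Hf (S \<omega>) \<bullet> b) * integral\<^sup>L M (\<lambda>\<omega>. Z j \<omega> \<bullet> b))"
      proof (rule sum.cong[OF refl])
        fix b :: 'x assume "b \<in> Basis"
        show "integral\<^sup>L M (\<lambda>\<omega>. (Hf (S \<omega>) \<bullet> b) * (Z j \<omega> \<bullet> b)) = integral\<^sup>L M (\<lambda>\<omega>. Hf (S \<omega>) \<bullet> b) * integral\<^sup>L M (\<lambda>\<omega>. Z j \<omega> \<bullet> b)"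
          by (rule indep_var_lebesgue_integral[OF indb Hb_int[OF \<open>b \<in> Basis\<close>] Zb_int])
      qed
      also have "\<dots> = 0"
      proof (rule sum.neutral, rule ballI)
        fix b :: 'x
        have "integral\<^sup>L M (\<lambda>\<omega>. Z j \<omega> \<bullet> b) = integral\<^sup>L M (Z j) \<bullet> b"
          by (rule integral_inner_left) (rule Zj_int)
        also have "\<dots> = 0" using insert.prems(3)[of j] by simp
        finally show "integral\<^sup>L M (\<lambda>\<omega>. Hf (S \<omega>) \<bullet> b) * integral\<^sup>L M (\<lambda>\<omega>. Z j \<omega> \<bullet> b) = 0" by simp
      qed
      finally show ?thesis .
    qed
    have "integral\<^sup>L M (\<lambda>\<omega>. cosh (l * norm (\<Sum>i\<in>insert j I. Z i \<omega>)))
        = integral\<^sup>L M (\<lambda>\<omega>. cosh (l * norm (S \<omega> + Z j \<omega>)))"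
      using insert.hyps by (simp add: S_def add.commute)
    also have "\<dots> \<le> integral\<^sup>L M (\<lambda>\<omega>. cosh (l * norm (S \<omega>)) * cosh (l*c) + inner (Hf (S \<omega>)) (Z j \<omega>))"
      by (rule integral_mono_AE) (use int1 int2 int3 pw in \<open>auto intro!: AE_I2\<close>)
    also have "\<dots> = integral\<^sup>L M (\<lambda>\<omega>. cosh (l * norm (S \<omega>))) * cosh (l*c)"
      using int2 int3 E3 by (simp add: integral_add)
    also have "\<dots> \<le> cosh (l*c) ^ card I * cosh (l*c)"
    proof (rule mult_right_mono)
      show "integral\<^sup>L M (\<lambda>\<omega>. cosh (l * norm (S \<omega>))) \<le> cosh (l*c) ^ card I"
        unfolding S_def using indI insert.prems(2,3) by (intro insert.IH) auto
    qed simp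
    also have "\<dots> = cosh (l*c) ^ card (insert j I)"
      using insert.hyps by simp
    finally show ?case .
  qed
qed


lemma norm_sum_tail:
  fixes Z :: "'i \<Rightarrow> 'w \<Rightarrow> 'x::euclidean_space" and M :: "'w measure" and c r :: real
  assumes P: "prob_space M" and fin: "finite I" and ne: "I \<noteq> {}"
    and ind: "prob_space.indep_vars M (\<lambda>_. borel) Z I"
    and bnd: "\<And>i \<omega>. i \<in> I \<Longrightarrow> \<omega> \<in> space M \<Longrightarrow> norm (Z i \<omega>) \<le> c"
    and mean: "\<And>i. i \<in> I \<Longrightarrow> integral\<^sup>L M (Z i) = 0"
    and c: "0 < c" and r: "0 < r"
  shows "measure M {\<omega>\<in>space M. r \<le> norm (\<Sum>i\<in>I. Z i \<omega>)} \<le> 2 * exp (-(r^2) / (2 * card I * c^2))"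
proof -
  interpret prob_space M by fact
  define n where "n = card I"
  have n: "0 < n" using fin ne by (simp add: n_def card_gt_0_iff)
  define l where "l = r / (n * c^2)"
  have l: "0 < l" using n c r by (simp add: l_def)
  have rv[measurable]: "\<And>i. i \<in> I \<Longrightarrow> Z i \<in> borel_measurable M"
    using ind unfolding indep_vars_def by auto
  define S where "S \<omega> = (\<Sum>i\<in>I. Z i \<omega>)" for \<omega>
  have S_m[measurable]: "S \<in> borel_measurable M"
    unfolding S_def using rv by (intro borel_measurable_sum) auto
  have S_bnd: "norm (S \<omega>) \<le> n * c" if "\<omega> \<in> space M" for \<omega>
  proof -
    have "norm (S \<omega>) \<le> (\<Sum>i\<in>I. norm (Z i \<omega>))" unfolding S_def by (rule norm_sum)
    also have "\<dots> \<le> (\<Sum>i\<in>I. c)" using bnd that by (intro sum_mono) auto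
    finally show ?thesis by (simp add: n_def)
  qed
  have int: "integrable M (\<lambda>\<omega>. cosh (l * norm (S \<omega>)))"
  proof (rule bounded_integrable[where B="cosh (l * (n * c))"])
    show "finite_measure M" by unfold_locales
    show "(\<lambda>\<omega>. cosh (l * norm (S \<omega>))) \<in> borel_measurable M" by measurable
    fix \<omega> assume w: "\<omega> \<in> space M"
    have "l * norm (S \<omega>) \<le> l * (n * c)" using l S_bnd[OF w] by (simp add: mult_left_mono)
    hence "cosh (l * norm (S \<omega>)) \<le> cosh (l * (n * c))"
      using l c by (subst cosh_real_nonneg_le_iff) auto
    thus "norm (cosh (l * norm (S \<omega>))) \<le> cosh (l * (n * c))" by simp
  qed
  have seteq: "{\<omega>\<in>space M. r \<le> norm (\<Sum>i\<in>I. Z i \<omega>)} = {\<omega>\<in>space M. cosh (l * r) \<le> cosh (l * norm (S \<omega>))}"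
  proof -
    have "r \<le> norm (S \<omega>) \<longleftrightarrow> cosh (l * r) \<le> cosh (l * norm (S \<omega>))" for \<omega>
      using l r by (subst cosh_real_nonneg_le_iff) auto
    thus ?thesis by (auto simp: S_def)
  qed
  have "measure M {\<omega>\<in>space M. cosh (l * r) \<le> cosh (l * norm (S \<omega>))} \<le> integral\<^sup>L M (\<lambda>\<omega>. cosh (l * norm (S \<omega>))) / cosh (l * r)"
    by (rule integral_Markov_inequality_measure[OF int, of "space M"]) auto
  also have "\<dots> \<le> cosh (l * c) ^ n / cosh (l * r)"
    unfolding S_def n_def
    by (intro divide_right_mono cosh_sum_bound[OF P fin ind bnd mean c l]) auto
  also have "\<dots> \<le> exp ((l*c)^2/2) ^ n / (exp (l * r) / 2)"
  proof (rule frac_le)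
    show "0 \<le> exp ((l*c)^2/2) ^ n" by simp
    show "cosh (l * c) ^ n \<le> exp ((l*c)^2/2) ^ n"
      by (rule power_mono[OF cosh_le_exp_sq]) simp
    show "0 < exp (l * r) / 2" by simp
    show "exp (l * r) / 2 \<le> cosh (l * r)"
      by (simp add: cosh_def)
  qed
  also have "\<dots> = 2 * exp (n * ((l*c)^2/2) - l * r)"
    by (simp add: exp_diff exp_of_nat_mult[symmetric])
  also have "n * ((l*c)^2/2) - l * r = -(r^2) / (2 * n * c^2)"
    using n c by (simp add: l_def power2_eq_square field_simps)
  finally show ?thesis using seteq by (simp add: n_def)
qed


lemma med_part:
  fixes v :: "nat \<Rightarrow> 'a::real_normed_vector"
  assumes H: "Hon \<subseteq> {1..K}" and card: "real (card Hon) > real K / 2"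
    and close: "\<forall>k\<in>Hon. norm (v k - g) \<le> r"
  shows "(\<exists>j. med_node K (2*r) v j) \<and>
     (\<forall>j. med_node K (2*r) v j \<longrightarrow> (\<forall>k\<in>Hon. norm (v k - v j) \<le> 4*r) \<and> norm (v j - g) \<le> 3*r)"
proof -
  have finH: "finite Hon" using H finite_subset by blast
  have "Hon \<noteq> {}" using card by auto
  then obtain j0 where j0: "j0 \<in> Hon" by blast
  have ex: "med_node K (2*r) v j0"
  proof -
    have sub: "Hon \<subseteq> {k'\<in>{1..K}. norm (v k' - v j0) \<le> 2*r}"
    proof
      fix k assume k: "k \<in> Hon"
      have "norm (v k - g) \<le> r" "norm (g - v j0) \<le> r"
        using close k j0 by (auto simp: norm_minus_commute)
      hence "norm (v k - v j0) \<le> r + r" by (rule norm_diff_triangle_le)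
      thus "k \<in> {k'\<in>{1..K}. norm (v k' - v j0) \<le> 2*r}" using H k by auto
    qed
    hence "card Hon \<le> card {k'\<in>{1..K}. norm (v k' - v j0) \<le> 2*r}"
      by (intro card_mono) auto
    thus ?thesis using card j0 H unfolding med_node_def by auto
  qed
  moreover have "(\<forall>k\<in>Hon. norm (v k - v j) \<le> 4*r) \<and> norm (v j - g) \<le> 3*r"
    if m: "med_node K (2*r) v j" for j
  proof -
    let ?A = "{k'\<in>{1..K}. norm (v k' - v j) \<le> 2*r}"
    have cA: "real (card ?A) > real K / 2" "j \<in> {1..K}" using m unfolding med_node_def by auto
    have "Hon \<inter> ?A \<noteq> {}"
    proof
      assume e: "Hon \<inter> ?A = {}"
      have "card (Hon \<union> ?A) = card Hon + card ?A"
        using e finH by (intro card_Un_disjoint) auto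
      moreover have "card (Hon \<union> ?A) \<le> card {1..K}"
        using H by (intro card_mono) auto
      ultimately have "real (card Hon) + real (card ?A) \<le> real K" by simp
      thus False using cA card by linarith
    qed
    then obtain k' where k': "k' \<in> Hon" "norm (v k' - v j) \<le> 2*r" by blast
    have "norm (v j - v k') \<le> 2*r" "norm (v k' - g) \<le> r"
      using k' close by (auto simp: norm_minus_commute)
    hence g3: "norm (v j - g) \<le> 2*r + r" by (rule norm_diff_triangle_le)
    have "norm (v k - v j) \<le> 4*r" if k: "k \<in> Hon" for k
    proof -
      have "norm (v k - g) \<le> r" "norm (g - v j) \<le> 3*r"
        using close k g3 by (auto simp: norm_minus_commute)
      hence "norm (v k - v j) \<le> r + 3*r" by (rule norm_diff_triangle_le)
      thus ?thesis by simp
    qed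
    thus ?thesis using g3 by simp
  qed
  ultimately show ?thesis by blast
qed

theorem lemma5:
  fixes M :: "'w measure" and D :: "'b measure"
    and f :: "'x::euclidean_space \<Rightarrow> 'b \<Rightarrow> real" and F :: "'x \<Rightarrow> real"
    and gs :: "'x \<Rightarrow> 'b \<Rightarrow> 'x" and gF :: "'x \<Rightarrow> 'x"
    and V \<delta> \<alpha> :: real and K B :: nat and Hon :: "nat set"
    and \<xi> :: "nat \<Rightarrow> nat \<Rightarrow> 'w \<Rightarrow> 'b"
    and x :: 'x
    and mu :: "'w \<Rightarrow> nat \<Rightarrow> 'x"
  assumes "prob_space M" and "prob_space D"
    and F_def: "\<And>y. F y = integral\<^sup>L D (f y)"
    and f_grad: "\<And>y s. ((\<lambda>z. f z s) has_derivative (\<lambda>h. gs y s \<bullet> h)) (at y)"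
    and F_grad: "\<And>y. (F has_derivative (\<lambda>h. gF y \<bullet> h)) (at y)"
    and gs_meas: "\<And>y. gs y \<in> borel_measurable D"
    and unbiased: "\<And>y. has_bochner_integral D (gs y) (gF y)"
    and noise: "\<And>y s. s \<in> space D \<Longrightarrow> norm (gs y s - gF y) \<le> V"
    and "0 < \<delta>" and "\<delta> < 1"
    and "0 \<le> \<alpha>" and "\<alpha> < 1/2"
    and "0 < K" and "Hon \<subseteq> {1..K}" and "real (card Hon) \<ge> (1 - \<alpha>) * real K"
    and "0 < B"
    and indep: "prob_space.indep_vars M (\<lambda>_. D) (\<lambda>(k, i). \<xi> k i) (Hon \<times> {1..B})"
    and distr: "\<And>k i. k \<in> Hon \<Longrightarrow> i \<in> {1..B} \<Longrightarrow> distr M D (\<xi> k i) = D"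
    and honest: "\<And>\<omega> k. k \<in> Hon \<Longrightarrow>
        mu \<omega> k = (1 / real B) *\<^sub>R (\<Sum>i = 1..B. gs x (\<xi> k i \<omega>))"
  shows "\<exists>E \<in> sets M. prob_space.prob M E \<ge> 1 - \<delta> \<and>
    (\<forall>\<omega> \<in> E.
      (let C = 2 * ln (2 * real K / \<delta>); r = V * sqrt (C / real B); T = 2 * r in
        (\<forall>k \<in> Hon. norm (mu \<omega> k - gF x) \<le> r) \<and>
        (\<exists>j. med_node K T (mu \<omega>) j) \<and>
        (\<forall>j. med_node K T (mu \<omega>) j \<longrightarrow>
           (\<forall>k \<in> Hon. norm (mu \<omega> k - mu \<omega> j) \<le> 4 * r) \<and>
           norm (mu \<omega> j - gF x) \<le> 3 * r)))"
proof -
  interpret P: prob_space M by fact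
  interpret PD: prob_space D by fact
  define C where "C = 2 * ln (2 * real K / \<delta>)"
  define r where "r = V * sqrt (C / real B)"
  obtain s0 where "s0 \<in> space D" using PD.not_empty by blast
  hence V0: "0 \<le> V" using noise[of s0 x] norm_ge_zero order_trans by blast
  have Bpos: "0 < real B" using \<open>0 < B\<close> by simp
  have K1: "1 \<le> real K" using \<open>0 < K\<close> by simp
  have ratio: "2 * real K / \<delta> > 1" using K1 \<open>0 < \<delta>\<close> \<open>\<delta> < 1\<close> by (simp add: field_simps)
  have Cpos: "0 < C" unfolding C_def using ratio by simp
  have xi_m: "\<xi> k i \<in> measurable M D" if "k \<in> Hon" "i \<in> {1..B}" for k i
    using indep that unfolding P.indep_vars_def by auto
  have fH: "finite Hon" using \<open>Hon \<subseteq> {1..K}\<close> finite_subset by blast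
  have cardH: "card Hon \<le> K"
    using card_mono[OF _ \<open>Hon \<subseteq> {1..K}\<close>] by simp
  define Z' where "Z' p \<omega> = gs x ((\<lambda>(k, i). \<xi> k i) p \<omega>) - gF x" for p \<omega>
  define bad where "bad k = {\<omega>\<in>space M. r < norm (mu \<omega> k - gF x)}" for k
  have mu_eq: "mu \<omega> k - gF x = (1 / real B) *\<^sub>R (\<Sum>p\<in>{k}\<times>{1..B}. Z' p \<omega>)" if k: "k \<in> Hon" for \<omega> k
  proof -
    have "(\<Sum>p\<in>{k}\<times>{1..B}. Z' p \<omega>) = (\<Sum>i=1..B. Z' (k, i) \<omega>)"
    proof -
      have "{k}\<times>{1..B} = Pair k ` {1..B}" by auto
      thus ?thesis by (simp add: sum.reindex inj_on_def)
    qed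
    also have "\<dots> = (\<Sum>i=1..B. gs x (\<xi> k i \<omega>)) - real B *\<^sub>R gF x"
      by (simp add: Z'_def sum_subtractf sum_constant_scaleR)
    finally show ?thesis using Bpos by (simp add: honest[OF k] scaleR_diff_right)
  qed
  have bad_sets: "bad k \<in> sets M" if k: "k \<in> Hon" for k
  proof -
    have "(\<lambda>\<omega>. mu \<omega> k - gF x) = (\<lambda>\<omega>. (1 / real B) *\<^sub>R (\<Sum>i=1..B. gs x (\<xi> k i \<omega>)) - gF x)"
      using honest[OF k] by auto
    moreover have "(\<lambda>\<omega>. (1 / real B) *\<^sub>R (\<Sum>i=1..B. gs x (\<xi> k i \<omega>)) - gF x) \<in> borel_measurable M"
      using xi_m[OF k] gs_meas[of x]
      by (intro borel_measurable_diff borel_measurable_scaleR borel_measurable_sum borel_measurable_const)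
         (auto intro: measurable_compose)
    ultimately have [measurable]: "(\<lambda>\<omega>. mu \<omega> k - gF x) \<in> borel_measurable M" by simp
    show ?thesis unfolding bad_def by measurable
  qed
  have bad_prob: "measure M (bad k) \<le> \<delta> / real K" if k: "k \<in> Hon" for k
  proof (cases "V = 0")
    case True
    have "bad k = {}"
    proof -
      have "norm (mu \<omega> k - gF x) \<le> 0" if w: "\<omega> \<in> space M" for \<omega>
      proof -
        have "Z' p \<omega> = 0" if p: "p \<in> {k}\<times>{1..B}" for p
        proof -
          have "(\<lambda>(k, i). \<xi> k i) p \<omega> \<in> space D"
          proof -
            obtain i where pi: "p = (k, i)" "i \<in> {1..B}" using p by auto
            show ?thesis using measurable_space[OF xi_m[OF k pi(2)] w] pi(1) by simp
          qed
          thus ?thesis using noise True by (force simp: Z'_def)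
        qed
        thus ?thesis by (simp add: mu_eq[OF k])
      qed
      moreover have "0 \<le> r" using True by (simp add: r_def)
      ultimately show ?thesis unfolding bad_def by force
    qed
    thus ?thesis using \<open>0 < \<delta>\<close> by simp
  next
    case False
    hence Vp: "0 < V" using V0 by simp
    have indk: "P.indep_vars (\<lambda>_. borel) Z' ({k}\<times>{1..B})"
    proof -
      have "P.indep_vars (\<lambda>_. D) (\<lambda>(k, i). \<xi> k i) ({k}\<times>{1..B})"
        using k by (intro P.indep_vars_subset[OF indep]) auto
      from P.indep_vars_compose2[OF this, of "\<lambda>_ s. gs x s - gF x" "\<lambda>_. borel"]
      show ?thesis unfolding Z'_def using gs_meas[of x] by auto
    qed
    have bndk: "norm (Z' p \<omega>) \<le> V" if p: "p \<in> {k}\<times>{1..B}" and w: "\<omega> \<in> space M" for p \<omega>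
    proof -
      have "(\<lambda>(k, i). \<xi> k i) p \<omega> \<in> space D"
      proof -
        obtain i where pi: "p = (k, i)" "i \<in> {1..B}" using p by auto
        show ?thesis using measurable_space[OF xi_m[OF k pi(2)] w] pi(1) by simp
      qed
      thus ?thesis using noise by (simp add: Z'_def)
    qed
    have meank: "integral\<^sup>L M (Z' p) = 0" if p: "p \<in> {k}\<times>{1..B}" for p
    proof -
      obtain i where pi: "p = (k, i)" "i \<in> {1..B}" using p by auto
      have m: "\<xi> k i \<in> measurable M D" using xi_m k pi by auto
      have "integral\<^sup>L M (Z' p) = integral\<^sup>L M (\<lambda>\<omega>. (\<lambda>s. gs x s - gF x) (\<xi> k i \<omega>))"
        by (simp add: Z'_def[abs_def] pi)
      also have "\<dots> = integral\<^sup>L (distr M D (\<xi> k i)) (\<lambda>s. gs x s - gF x)"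
        using m gs_meas[of x] by (intro integral_distr[symmetric]) auto
      also have "\<dots> = integral\<^sup>L D (\<lambda>s. gs x s - gF x)"
        using distr k pi by simp
      also have "\<dots> = integral\<^sup>L D (gs x) - integral\<^sup>L D (\<lambda>s. gF x)"
        using integrable.intros[OF unbiased[of x]] by (intro Bochner_Integration.integral_diff) auto
      also have "\<dots> = 0"
        using unbiased[of x] by (simp add: has_bochner_integral_integral_eq PD.prob_space)
      finally show ?thesis .
    qed
    have cardk: "card ({k}\<times>{1..B}) = B" by (simp add: card_cartesian_product)
    have rB: "0 < real B * r" using Vp Cpos Bpos by (simp add: r_def)
    have tail: "measure M {\<omega>\<in>space M. real B * r \<le> norm (\<Sum>p\<in>{k}\<times>{1..B}. Z' p \<omega>)}
        \<le> 2 * exp (-((real B * r)^2) / (2 * card ({k}\<times>{1..B}) * V^2))"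
      using \<open>0 < B\<close> by (intro norm_sum_tail[OF \<open>prob_space M\<close> _ _ indk bndk meank Vp rB]) auto
    have "(real B * r)^2 / (2 * card ({k}\<times>{1..B}) * V^2) = C / 2"
      using Bpos Vp Cpos by (simp add: cardk r_def power_mult_distrib power2_eq_square field_simps)
    also have "C / 2 = ln (2 * real K / \<delta>)" by (simp add: C_def)
    finally have ex: "exp (-((real B * r)^2) / (2 * card ({k}\<times>{1..B}) * V^2)) = \<delta> / (2 * real K)"
      using ratio \<open>0 < \<delta>\<close> K1 by (simp add: exp_minus exp_ln field_simps)
    have sub: "bad k \<subseteq> {\<omega>\<in>space M. real B * r \<le> norm (\<Sum>p\<in>{k}\<times>{1..B}. Z' p \<omega>)}"
    proof
      fix \<omega> assume "\<omega> \<in> bad k"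
      hence w: "\<omega> \<in> space M" and lt: "r < norm (mu \<omega> k - gF x)" unfolding bad_def by auto
      have "norm (mu \<omega> k - gF x) = norm (\<Sum>p\<in>{k}\<times>{1..B}. Z' p \<omega>) / real B"
        using Bpos by (simp add: mu_eq[OF k])
      with lt Bpos show "\<omega> \<in> {\<omega>\<in>space M. real B * r \<le> norm (\<Sum>p\<in>{k}\<times>{1..B}. Z' p \<omega>)}"
        using w by (simp add: field_simps)
    qed
    have setm: "{\<omega>\<in>space M. real B * r \<le> norm (\<Sum>p\<in>{k}\<times>{1..B}. Z' p \<omega>)} \<in> sets M"
    proof -
      have [measurable]: "Z' p \<in> borel_measurable M" if "p \<in> {k}\<times>{1..B}" for p
        using indk that unfolding P.indep_vars_def by auto
      have [measurable]: "(\<lambda>\<omega>. \<Sum>p\<in>{k}\<times>{1..B}. Z' p \<omega>) \<in> borel_measurable M"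
        by (intro borel_measurable_sum) auto
      show ?thesis by measurable
    qed
    have "measure M (bad k) \<le> measure M {\<omega>\<in>space M. real B * r \<le> norm (\<Sum>p\<in>{k}\<times>{1..B}. Z' p \<omega>)}"
      by (rule P.finite_measure_mono[OF sub setm])
    also have "\<dots> \<le> 2 * (\<delta> / (2 * real K))" using tail ex by simp
    finally show ?thesis using K1 by simp
  qed
  define E where "E = space M - (\<Union>k\<in>Hon. bad k)"
  have UE: "(\<Union>k\<in>Hon. bad k) \<in> sets M" using fH bad_sets by auto
  have E_sets: "E \<in> sets M" unfolding E_def using UE by auto
  have "measure M (\<Union>k\<in>Hon. bad k) \<le> (\<Sum>k\<in>Hon. measure M (bad k))"
    using fH bad_sets by (intro P.finite_measure_subadditive_finite) auto
  also have "\<dots> \<le> (\<Sum>k\<in>Hon. \<delta> / real K)" by (intro sum_mono bad_prob)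
  also have "\<dots> = real (card Hon) * (\<delta> / real K)" by simp
  also have "\<dots> \<le> real K * (\<delta> / real K)"
    using cardH \<open>0 < \<delta>\<close> by (intro mult_right_mono) auto
  also have "\<dots> = \<delta>" using K1 by simp
  finally have "measure M (\<Union>k\<in>Hon. bad k) \<le> \<delta>" .
  hence probE: "measure M E \<ge> 1 - \<delta>"
    unfolding E_def using P.prob_compl[OF UE] by simp
  have cardH2: "real (card Hon) > real K / 2"
  proof -
    have "(1 - \<alpha>) * real K > (1/2) * real K"
      using \<open>\<alpha> < 1/2\<close> K1 by (intro mult_strict_right_mono) auto
    thus ?thesis using \<open>real (card Hon) \<ge> (1 - \<alpha>) * real K\<close> by simp
  qed
  have good: "(\<forall>k\<in>Hon. norm (mu \<omega> k - gF x) \<le> r) \<and> (\<exists>j. med_node K (2*r) (mu \<omega>) j) \<and>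
     (\<forall>j. med_node K (2*r) (mu \<omega>) j \<longrightarrow> (\<forall>k\<in>Hon. norm (mu \<omega> k - mu \<omega> j) \<le> 4*r) \<and> norm (mu \<omega> j - gF x) \<le> 3*r)"
    if w: "\<omega> \<in> E" for \<omega>
  proof -
    have cl: "\<forall>k\<in>Hon. norm (mu \<omega> k - gF x) \<le> r"
      using w unfolding E_def bad_def by auto
    show ?thesis using cl med_part[OF \<open>Hon \<subseteq> {1..K}\<close> cardH2 cl] by blast
  qed
  show ?thesis
    unfolding Let_def C_def[symmetric] r_def[symmetric]
    using E_sets probE good by blast
qed

end
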